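(* Let $L$ be any finite-dimensional Lie algebra over a field $F$. Then $\phi^*(L)=R(L)$, the solvable radical of $L$.
   Context: For a nonzero subalgebra $X$ of $L$, the strict core $k(X)$ is the sum of all ideals of $L$ that are proper subalgebras of $X$ (it is $0$ if there are none). For a maximal subalgebra $M$ of $L$, a subalgebra $C$ is a completion of $M$ if $C\not\subseteq M$ but every proper subalgebra of $C$ that is an ideal of $L$ is contained in $M$; an ideal completion is a completion that is an ideal of $L$; an abelian ideal completion is an ideal completion $C$ with $C/k(C)$ abelian. $F^*(L)$ is the intersection of all maximal subalgebras of $L$ which have no abelian ideal completion (with $F^*(L)=L$ if there are no such maximal subalgebras), and $\phi^*(L)$ is the largest ideal of $L$ contained in $F^*(L)$. $R(L)$ is the largest solvable ideal of $L$. *)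

theory Defs
  imports Main "HOL.Vector_Spaces"
begin

definition lie_algebra :: "('a::field \<Rightarrow> 'b::ab_group_add \<Rightarrow> 'b) \<Rightarrow> ('b \<Rightarrow> 'b \<Rightarrow> 'b) \<Rightarrow> bool" where
  "lie_algebra scale br \<longleftrightarrow>
     vector_space scale \<and>
     (\<forall>x y z. br (x + y) z = br x z + br y z) \<and>
     (\<forall>x y z. br x (y + z) = br x y + br x z) \<and>
     (\<forall>a x y. br (scale a x) y = scale a (br x y)) \<and>
     (\<forall>a x y. br x (scale a y) = scale a (br x y)) \<and>
     (\<forall>x. br x x = 0) \<and>
     (\<forall>x y z. br x (br y z) + br y (br z x) + br z (br x y) = 0)"

definition fin_dim :: "('a::field \<Rightarrow> 'b::ab_group_add \<Rightarrow> 'b) \<Rightarrow> bool" where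
  "fin_dim scale \<longleftrightarrow> (\<exists>B. finite B \<and> module.span scale B = UNIV)"

definition lie_subalgebra :: "('a::field \<Rightarrow> 'b::ab_group_add \<Rightarrow> 'b) \<Rightarrow> ('b \<Rightarrow> 'b \<Rightarrow> 'b) \<Rightarrow> 'b set \<Rightarrow> bool" where
  "lie_subalgebra scale br S \<longleftrightarrow> module.subspace scale S \<and> (\<forall>x\<in>S. \<forall>y\<in>S. br x y \<in> S)"

definition lie_ideal :: "('a::field \<Rightarrow> 'b::ab_group_add \<Rightarrow> 'b) \<Rightarrow> ('b \<Rightarrow> 'b \<Rightarrow> 'b) \<Rightarrow> 'b set \<Rightarrow> bool" where
  "lie_ideal scale br I \<longleftrightarrow> module.subspace scale I \<and> (\<forall>x. \<forall>y\<in>I. br x y \<in> I)"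

definition lie_bracket_set :: "('a::field \<Rightarrow> 'b::ab_group_add \<Rightarrow> 'b) \<Rightarrow> ('b \<Rightarrow> 'b \<Rightarrow> 'b) \<Rightarrow> 'b set \<Rightarrow> 'b set \<Rightarrow> 'b set" where
  "lie_bracket_set scale br S T = module.span scale {br x y | x y. x \<in> S \<and> y \<in> T}"

fun derived_series :: "('a::field \<Rightarrow> 'b::ab_group_add \<Rightarrow> 'b) \<Rightarrow> ('b \<Rightarrow> 'b \<Rightarrow> 'b) \<Rightarrow> nat \<Rightarrow> 'b set \<Rightarrow> 'b set" where
  "derived_series scale br 0 S = S"
| "derived_series scale br (Suc n) S =
     lie_bracket_set scale br (derived_series scale br n S) (derived_series scale br n S)"

definition lie_solvable :: "('a::field \<Rightarrow> 'b::ab_group_add \<Rightarrow> 'b) \<Rightarrow> ('b \<Rightarrow> 'b \<Rightarrow> 'b) \<Rightarrow> 'b set \<Rightarrow> bool" where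
  "lie_solvable scale br S \<longleftrightarrow> (\<exists>n. derived_series scale br n S = {0})"

definition maximal_subalgebra :: "('a::field \<Rightarrow> 'b::ab_group_add \<Rightarrow> 'b) \<Rightarrow> ('b \<Rightarrow> 'b \<Rightarrow> 'b) \<Rightarrow> 'b set \<Rightarrow> bool" where
  "maximal_subalgebra scale br M \<longleftrightarrow> lie_subalgebra scale br M \<and> M \<noteq> UNIV \<and>
     (\<forall>S. lie_subalgebra scale br S \<and> M \<subseteq> S \<longrightarrow> S = M \<or> S = UNIV)"

text \<open>Strict core k(X): sum of all ideals of L that are proper subsets (subalgebras) of X;
  the sum of subspaces is the span of their union, which is {0} if there are none.\<close>
definition strict_core :: "('a::field \<Rightarrow> 'b::ab_group_add \<Rightarrow> 'b) \<Rightarrow> ('b \<Rightarrow> 'b \<Rightarrow> 'b) \<Rightarrow> 'b set \<Rightarrow> 'b set" where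
  "strict_core scale br X = module.span scale (\<Union>{I. lie_ideal scale br I \<and> I \<subset> X})"

definition completion :: "('a::field \<Rightarrow> 'b::ab_group_add \<Rightarrow> 'b) \<Rightarrow> ('b \<Rightarrow> 'b \<Rightarrow> 'b) \<Rightarrow> 'b set \<Rightarrow> 'b set \<Rightarrow> bool" where
  "completion scale br M C \<longleftrightarrow> lie_subalgebra scale br C \<and> \<not> C \<subseteq> M \<and>
     (\<forall>I. lie_subalgebra scale br I \<and> I \<subset> C \<and> lie_ideal scale br I \<longrightarrow> I \<subseteq> M)"

definition ideal_completion :: "('a::field \<Rightarrow> 'b::ab_group_add \<Rightarrow> 'b) \<Rightarrow> ('b \<Rightarrow> 'b \<Rightarrow> 'b) \<Rightarrow> 'b set \<Rightarrow> 'b set \<Rightarrow> bool" where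
  "ideal_completion scale br M C \<longleftrightarrow> completion scale br M C \<and> lie_ideal scale br C"

text \<open>C/k(C) abelian, i.e. [C,C] \<subseteq> k(C).\<close>
definition abelian_ideal_completion :: "('a::field \<Rightarrow> 'b::ab_group_add \<Rightarrow> 'b) \<Rightarrow> ('b \<Rightarrow> 'b \<Rightarrow> 'b) \<Rightarrow> 'b set \<Rightarrow> 'b set \<Rightarrow> bool" where
  "abelian_ideal_completion scale br M C \<longleftrightarrow> ideal_completion scale br M C \<and>
     (\<forall>x\<in>C. \<forall>y\<in>C. br x y \<in> strict_core scale br C)"

text \<open>F*(L); an empty intersection is UNIV = L.\<close>
definition Fstar :: "('a::field \<Rightarrow> 'b::ab_group_add \<Rightarrow> 'b) \<Rightarrow> ('b \<Rightarrow> 'b \<Rightarrow> 'b) \<Rightarrow> 'b set" where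
  "Fstar scale br = \<Inter>{M. maximal_subalgebra scale br M \<and>
                          \<not> (\<exists>C. abelian_ideal_completion scale br M C)}"

definition phistar :: "('a::field \<Rightarrow> 'b::ab_group_add \<Rightarrow> 'b) \<Rightarrow> ('b \<Rightarrow> 'b \<Rightarrow> 'b) \<Rightarrow> 'b set" where
  "phistar scale br = (GREATEST I. lie_ideal scale br I \<and> I \<subseteq> Fstar scale br)"

definition solv_radical :: "('a::field \<Rightarrow> 'b::ab_group_add \<Rightarrow> 'b) \<Rightarrow> ('b \<Rightarrow> 'b \<Rightarrow> 'b) \<Rightarrow> 'b set" where
  "solv_radical scale br = (GREATEST I. lie_ideal scale br I \<and> lie_solvable scale br I)"

end

theory Submission imports Defs begin

lemma nat_step_lemma:
  assumes "\<not> Q (0::nat)" "Q n" shows "\<exists>k. \<not> Q k \<and> Q (Suc k)"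
  using assms by (induction n) auto

lemma nat_desc: assumes "\<And>n. (f::nat\<Rightarrow>nat) (Suc n) < f n" shows False
proof -
  have "f n + n \<le> f 0" for n
  proof (induct n)
    case (Suc n) then show ?case using assms[of n] by linarith
  qed simp
  from this[of "Suc (f 0)"] show False by simp
qed

locale fdl = finite_dimensional_vector_space scale Bas
  for scale :: "'a::field \<Rightarrow> 'b::ab_group_add \<Rightarrow> 'b" and Bas +
  fixes br :: "'b \<Rightarrow> 'b \<Rightarrow> 'b"
  assumes lie: "lie_algebra scale br"
begin

abbreviation "ideal I \<equiv> lie_ideal scale br I"
abbreviation "subalg S \<equiv> lie_subalgebra scale br S"

lemma addl: "br (x + y) z = br x z + br y z" using lie unfolding lie_algebra_def by blast
lemma addr: "br x (y + z) = br x y + br x z" using lie unfolding lie_algebra_def by blast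
lemma scl: "br (scale a x) y = scale a (br x y)" using lie unfolding lie_algebra_def by blast
lemma scr: "br x (scale a y) = scale a (br x y)" using lie unfolding lie_algebra_def by blast
lemma alt: "br x x = 0" using lie unfolding lie_algebra_def by blast
lemma jac: "br x (br y z) + br y (br z x) + br z (br x y) = 0" using lie unfolding lie_algebra_def by blast

lemma zerol[simp]: "br 0 y = 0" using addl[of 0 0 y] by simp
lemma zeror[simp]: "br x 0 = 0" using addr[of x 0 0] by simp
lemma negl: "br (- x) y = - br x y" using addl[of x "-x" y] by (simp add: eq_neg_iff_add_eq_0 add.commute)
lemma negr: "br x (- y) = - br x y" using addr[of x y "-y"] by (simp add: eq_neg_iff_add_eq_0 add.commute)
lemma diffl: "br (x - y) z = br x z - br y z" using addl[of x "-y" z] negl by simp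
lemma diffr: "br x (y - z) = br x y - br x z" using addr[of x y "-z"] negr by simp
lemma anti: "br x y = - br y x"
proof -
  have "br (x+y) (x+y) = 0" by (rule alt)
  moreover have "br (x+y) (x+y) = br x x + br x y + (br y x + br y y)" by (simp add: addl addr add.assoc)
  ultimately have "br x y + br y x = 0" by (simp add: alt)
  then show ?thesis by (simp add: eq_neg_iff_add_eq_0)
qed
lemma deriv: "br z (br x y) = br (br z x) y + br x (br z y)"
proof -
  have "br x (br y z) + br y (br z x) + br z (br x y) = 0" by (rule jac)
  moreover have "br x (br y z) = - br x (br z y)" using anti[of y z] negr by simp
  moreover have "br y (br z x) = - br (br z x) y" by (rule anti)
  ultimately show ?thesis by (simp add: algebra_simps eq_neg_iff_add_eq_0)

qed

lemma ideal_sub: "ideal I \<Longrightarrow> subspace I" by (simp add: lie_ideal_def)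
lemma ideal_l: "ideal I \<Longrightarrow> y \<in> I \<Longrightarrow> br x y \<in> I" by (simp add: lie_ideal_def)
lemma ideal_r: "ideal I \<Longrightarrow> y \<in> I \<Longrightarrow> br y x \<in> I"
proof -
  assume a: "ideal I" "y \<in> I"
  then have "- br x y \<in> I" using ideal_l ideal_sub subspace_neg by blast
  then show ?thesis using anti[of y x] by simp
qed
lemma ideal_subalg: "ideal I \<Longrightarrow> subalg I" by (simp add: lie_ideal_def lie_subalgebra_def)
lemma subalg_sub: "subalg I \<Longrightarrow> subspace I" by (simp add: lie_subalgebra_def)
lemma subalg_br: "subalg I \<Longrightarrow> x \<in> I \<Longrightarrow> y \<in> I \<Longrightarrow> br x y \<in> I" by (simp add: lie_subalgebra_def)

lemma lin_br: "subspace {w. br z w \<in> span S}"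
  by (simp add: subspace_def addr scr span_add span_scale span_zero)

lemma bracket_ideal:
  assumes "ideal I" "ideal J" shows "ideal (lie_bracket_set scale br I J)"
  unfolding lie_ideal_def lie_bracket_set_def
proof (intro conjI allI ballI)
  fix z w assume "w \<in> span {br x y |x y. x \<in> I \<and> y \<in> J}"
  then show "br z w \<in> span {br x y |x y. x \<in> I \<and> y \<in> J}"
  proof (induct rule: span_induct)
    case base show ?case by (rule lin_br)
  next
    case (step v)
    then obtain x y where v: "v = br x y" "x \<in> I" "y \<in> J" by blast
    have "br z v = br (br z x) y + br x (br z y)" using v(1) deriv[of z x y] by simp
    moreover have "br z x \<in> I" "br z y \<in> J" using v assms ideal_l by auto
    then have "br (br z x) y \<in> {br x y |x y. x \<in> I \<and> y \<in> J}" "br x (br z y) \<in> {br x y |x y. x \<in> I \<and> y \<in> J}"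
      using v by blast+
    then have "br (br z x) y \<in> span {br x y |x y. x \<in> I \<and> y \<in> J}" "br x (br z y) \<in> span {br x y |x y. x \<in> I \<and> y \<in> J}"
      by (auto intro: span_base)
    ultimately show ?case by (simp add: span_add)
  qed
qed simp

lemma bracket_mono: "I \<subseteq> I' \<Longrightarrow> J \<subseteq> J' \<Longrightarrow> lie_bracket_set scale br I J \<subseteq> lie_bracket_set scale br I' J'"
  unfolding lie_bracket_set_def by (rule span_mono) blast

lemma bracket_in_sub: "subalg I \<Longrightarrow> lie_bracket_set scale br I I \<subseteq> I"
proof -
  assume a: "subalg I"
  have "{br x y |x y. x \<in> I \<and> y \<in> I} \<subseteq> I" using subalg_br[OF a] by blast
  then show ?thesis unfolding lie_bracket_set_def using subalg_sub[OF a] by (rule span_minimal)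
qed

lemma ds_ideal: "ideal I \<Longrightarrow> ideal (derived_series scale br n I)"
proof (induction n)
  case (Suc n) then show ?case using bracket_ideal[of "derived_series scale br n I" "derived_series scale br n I"] by simp
qed simp

lemma ds_dec: "ideal I \<Longrightarrow> derived_series scale br (Suc n) I \<subseteq> derived_series scale br n I"
proof -
  assume "ideal I"
  then have "subalg (derived_series scale br n I)" using ds_ideal ideal_subalg by blast
  then show ?thesis using bracket_in_sub by simp
qed

lemma ds_le: "ideal I \<Longrightarrow> derived_series scale br n I \<subseteq> I"
proof (induction n)
  case (Suc n) then show ?case using ds_dec[of I n] by blast
qed simp

lemma dim_lt: "subspace S \<Longrightarrow> subspace T \<Longrightarrow> S \<subset> T \<Longrightarrow> dim S < dim T"
proof -
  assume a: "subspace S" "subspace T" "S \<subset> T"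
  have "span S = S" "span T = T" using a by simp_all
  then have "span S \<subset> span T" using a by (simp only:)
  then show ?thesis by (rule dim_psubset)
qed

lemma stab:
  assumes "\<And>n. subspace (X n)" "\<And>n. X (Suc n) \<subseteq> X n"
  shows "\<exists>n. X (Suc n) = X n"
proof (rule ccontr)
  assume neg: "\<not> ?thesis"
  have "dim (X (Suc n)) < dim (X n)" for n
  proof -
    have "X (Suc n) \<noteq> X n" using neg by blast
    then have "X (Suc n) \<subset> X n" using assms(2)[of n] by blast
    then show ?thesis by (rule dim_lt[OF assms(1) assms(1)])
  qed
  then show False using nat_desc[of "\<lambda>n. dim (X n)"] by blast
qed


lemma strict_core_sub:
  assumes "completion scale br M C" "subspace M"
  shows "strict_core scale br C \<subseteq> M"
  unfolding strict_core_def
proof (rule span_minimal[OF _ assms(2)])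
  show "\<Union>{I. ideal I \<and> I \<subset> C} \<subseteq> M"
  proof
    fix x assume "x \<in> \<Union>{I. ideal I \<and> I \<subset> C}"
    then obtain I where I: "ideal I" "I \<subset> C" "x \<in> I" by blast
    then have "subalg I" by (simp add: ideal_subalg)
    then have "I \<subseteq> M" using I assms(1) unfolding completion_def by blast
    then show "x \<in> M" using I by blast
  qed
qed

lemma max_subalg: "maximal_subalgebra scale br M \<Longrightarrow> subalg M"
  by (simp add: maximal_subalgebra_def)

lemma part1:
  assumes R: "ideal R" "derived_series scale br n R = {0}"
    and M: "maximal_subalgebra scale br M" and nR: "\<not> R \<subseteq> M"
  shows "\<exists>C. abelian_ideal_completion scale br M C"
proof -
  let ?D = "\<lambda>k. derived_series scale br k R"
  have M0: "0 \<in> M" using max_subalg[OF M] subalg_sub subspace_0 by blast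
  have "\<exists>k. \<not> ?D k \<subseteq> M \<and> ?D (Suc k) \<subseteq> M"
    by (rule nat_step_lemma[of "\<lambda>k. ?D k \<subseteq> M" n]) (use nR R(2) M0 in auto)
  then obtain k where k: "\<not> ?D k \<subseteq> M" "?D (Suc k) \<subseteq> M" by blast
  let ?P = "\<lambda>C. ideal C \<and> C \<subseteq> ?D k \<and> \<not> C \<subseteq> M"
  have "?P (?D k)" using ds_ideal R(1) k by auto
  then obtain C where C: "?P C" and Cmin: "\<And>C'. ?P C' \<Longrightarrow> dim C \<le> dim C'"
    using ex_has_least_nat[of ?P "?D k" dim] by blast
  have Csa: "subalg C" using C ideal_subalg by blast
  have compl: "completion scale br M C"
    unfolding completion_def
  proof (intro conjI allI impI)
    show "subalg C" by fact
    show "\<not> C \<subseteq> M" using C by blast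
    fix I assume I: "subalg I \<and> I \<subset> C \<and> ideal I"
    show "I \<subseteq> M"
    proof (rule ccontr)
      assume "\<not> I \<subseteq> M"
      then have "?P I" using I C by blast
      then have "dim C \<le> dim I" by (rule Cmin)
      moreover have "dim I < dim C" using I C ideal_sub dim_lt by blast
      ultimately show False by simp
    qed
  qed
  let ?B = "lie_bracket_set scale br C C"
  have Bi: "ideal ?B" using bracket_ideal C by blast
  have BC: "?B \<subseteq> C" using bracket_in_sub Csa by blast
  have "?B \<subseteq> ?D (Suc k)" using bracket_mono[of C "?D k" C "?D k"] C by simp
  with k have BM: "?B \<subseteq> M" by blast
  have BC': "?B \<subset> C" using BC BM C by blast
  have Bsc: "?B \<subseteq> strict_core scale br C"
  proof
    fix x assume "x \<in> ?B"
    then have "x \<in> \<Union>{I. ideal I \<and> I \<subset> C}" using Bi BC' by blast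
    then show "x \<in> strict_core scale br C" unfolding strict_core_def by (rule span_base)
  qed
  have "abelian_ideal_completion scale br M C"
    unfolding abelian_ideal_completion_def ideal_completion_def
  proof (intro conjI ballI)
    show "completion scale br M C" by fact
    show "ideal C" using C by blast
    fix x y assume "x \<in> C" "y \<in> C"
    then have "br x y \<in> {br x y |x y. x \<in> C \<and> y \<in> C}" by blast
    then have "br x y \<in> ?B" unfolding lie_bracket_set_def by (rule span_base)
    then show "br x y \<in> strict_core scale br C" using Bsc by blast
  qed
  then show ?thesis by blast
qed

lemma solv_in_Fstar:
  assumes "ideal R" "lie_solvable scale br R" shows "R \<subseteq> Fstar scale br"
proof -
  obtain n where n: "derived_series scale br n R = {0}" using assms(2) unfolding lie_solvable_def by blast
  show ?thesis unfolding Fstar_def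
  proof (rule Inter_greatest)
    fix M assume "M \<in> {M. maximal_subalgebra scale br M \<and> \<not> (\<exists>C. abelian_ideal_completion scale br M C)}"
    then show "R \<subseteq> M" using part1[OF assms(1) n] by blast
  qed
qed


lemma choose_max:
  assumes "Q B0"
  obtains B where "Q B" "\<And>B'. Q B' \<Longrightarrow> dim B' \<le> dim B"
proof -
  obtain B where B: "Q B" "\<And>B'. Q B' \<Longrightarrow> dimension - dim B \<le> dimension - dim B'"
    using ex_has_least_nat[of Q B0 "\<lambda>B. dimension - dim B"] assms by blast
  have "dim B' \<le> dim B" if "Q B'" for B'
    using B(2)[OF that] dim_subset_UNIV[of B] dim_subset_UNIV[of B'] by linarith
  then show ?thesis using B(1) that by blast
qed

lemma iter_in: "(\<And>w. w \<in> S \<Longrightarrow> f w \<in> S) \<Longrightarrow> w \<in> S \<Longrightarrow> (f ^^ n) w \<in> S"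
  by (induction n) auto

lemma engel:
  assumes K: "ideal K"
    and nil: "\<And>x y. x \<in> J \<Longrightarrow> y \<in> J \<Longrightarrow> \<exists>n. (br x ^^ n) y \<in> K"
  shows "subalg A \<Longrightarrow> K \<subseteq> A \<Longrightarrow> A \<subseteq> J \<Longrightarrow> subspace W \<Longrightarrow> subspace U \<Longrightarrow> K \<subseteq> U \<Longrightarrow> U \<subset> W \<Longrightarrow> W \<subseteq> J
     \<Longrightarrow> (\<And>a w. a \<in> A \<Longrightarrow> w \<in> W \<Longrightarrow> br a w \<in> W) \<Longrightarrow> (\<And>a u. a \<in> A \<Longrightarrow> u \<in> U \<Longrightarrow> br a u \<in> U)
     \<Longrightarrow> \<exists>w\<in>W. w \<notin> U \<and> (\<forall>a\<in>A. br a w \<in> U)"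
proof (induction "dim A" arbitrary: A W U rule: less_induct)
  case less
  note IH = less.hyps
  note p = less.prems
  show ?case
  proof (cases "A = K")
    case True
    obtain w where w: "w \<in> W" "w \<notin> U" using p(7) by blast
    have "\<forall>a\<in>A. br a w \<in> U" using True K p(6) ideal_r by blast
    then show ?thesis using w by blast
  next
    case False
    hence KA: "K \<subset> A" using p(2) by blast
    let ?Q = "\<lambda>B. subalg B \<and> K \<subseteq> B \<and> B \<subset> A"
    have "?Q K" using KA ideal_subalg K by blast
    then obtain B where B: "?Q B" and Bmax: "\<And>B'. ?Q B' \<Longrightarrow> dim B' \<le> dim B"
      by (rule choose_max[of ?Q K]) blast+
    have Asub: "subspace A" using p(1) subalg_sub by blast
    have Bsub: "subspace B" using B subalg_sub by blast
    have dBA: "dim B < dim A" using B Asub Bsub dim_lt by blast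
    have "\<exists>w\<in>A. w \<notin> B \<and> (\<forall>a\<in>B. br a w \<in> B)"
    proof (rule IH[OF dBA])
      show "subalg B" "K \<subseteq> B" "B \<subset> A" "subspace A" "subspace B" "K \<subseteq> B" using B Asub Bsub by auto
      show "B \<subseteq> J" "A \<subseteq> J" using B p(3) by auto
      show "br a w \<in> A" if "a \<in> B" "w \<in> A" for a w using that B p(1) subalg_br by blast
      show "br a u \<in> B" if "a \<in> B" "u \<in> B" for a u using that B subalg_br by blast
    qed
    then obtain y where y: "y \<in> A" "y \<notin> B" "\<And>b. b \<in> B \<Longrightarrow> br b y \<in> B" by blast
    define T where "T = {b + scale c y | b c. b \<in> B}"
    have BT: "B \<subseteq> T" unfolding T_def by force
    have yT: "y \<in> T"
    proof -
      have "y = 0 + scale 1 y" by simp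
      then show ?thesis unfolding T_def using subspace_0[OF Bsub] by blast
    qed
    have TA: "T \<subseteq> A" unfolding T_def using B y(1) Asub subspace_add subspace_scale by blast
    have Tsub: "subspace T" unfolding subspace_def
    proof (intro conjI ballI allI)
      show "0 \<in> T" using BT subspace_0[OF Bsub] by blast
      fix u v assume "u \<in> T" "v \<in> T"
      then obtain b c b' c' where uv: "u = b + scale c y" "v = b' + scale c' y" "b \<in> B" "b' \<in> B"
        unfolding T_def by blast
      have "u + v = (b + b') + scale (c + c') y" using uv by (simp add: algebra_simps)
      then show "u + v \<in> T" unfolding T_def using uv subspace_add[OF Bsub] by blast
    next
      fix d u assume "u \<in> T"
      then obtain b c where u: "u = b + scale c y" "b \<in> B" unfolding T_def by blast
      have "scale d u = scale d b + scale (d * c) y" using u by (simp add: algebra_simps)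
      then show "scale d u \<in> T" unfolding T_def using u subspace_scale[OF Bsub] by blast
    qed
    have Tsa: "subalg T" unfolding lie_subalgebra_def
    proof (intro conjI ballI)
      show "subspace T" by fact
      fix u v assume "u \<in> T" "v \<in> T"
      then obtain b c b' c' where uv: "u = b + scale c y" "v = b' + scale c' y" "b \<in> B" "b' \<in> B"
        unfolding T_def by blast
      have "br u v = br b b' + scale c' (br b y) + scale c (br y b')"
        using uv by (simp add: addl addr scl scr add.assoc alt scale_right_distrib add.commute add.left_commute)
      also have "\<dots> = br b b' + scale c' (br b y) + scale c (- br b' y)"
        using anti[of y b'] by simp
      finally have e: "br u v = br b b' + scale c' (br b y) + scale c (- br b' y)" .
      have "br b b' \<in> B" using uv B subalg_br by blast
      moreover have "br b y \<in> B" "br b' y \<in> B" using uv y(3) by auto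
      ultimately have "br u v \<in> B" unfolding e using Bsub
        by (meson subspace_add subspace_neg subspace_scale)
      then show "br u v \<in> T" using BT by blast
    qed
    have TeqA: "T = A"
    proof (rule ccontr)
      assume "T \<noteq> A"
      then have "?Q T" using Tsa B BT TA by blast
      then have "dim T \<le> dim B" by (rule Bmax)
      moreover have "B \<subset> T" using BT yT y(2) by blast
      then have "dim B < dim T" using dim_lt Bsub Tsub by blast
      ultimately show False by simp
    qed
    have "\<exists>w\<in>W. w \<notin> U \<and> (\<forall>a\<in>B. br a w \<in> U)"
    proof (rule IH[OF dBA])
      show "subalg B" "K \<subseteq> B" "B \<subseteq> J" using B p(3) by auto
      show "subspace W" "subspace U" "K \<subseteq> U" "U \<subset> W" "W \<subseteq> J" using p by auto
      show "br a w \<in> W" if "a \<in> B" "w \<in> W" for a w using that B p(9) by blast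
      show "br a u \<in> U" if "a \<in> B" "u \<in> U" for a u using that B p(10) by blast
    qed
    then obtain w1 where w1: "w1 \<in> W" "w1 \<notin> U" "\<And>b. b \<in> B \<Longrightarrow> br b w1 \<in> U" by blast
    define W0 where "W0 = {w \<in> W. \<forall>b\<in>B. br b w \<in> U}"
    have W0y: "br y w \<in> W0" if "w \<in> W0" for w
    proof -
      have "br y w \<in> W" using that p(9) y(1) unfolding W0_def by blast
      moreover have "br b (br y w) \<in> U" if b: "b \<in> B" for b
      proof -
        have "br b (br y w) = br (br b y) w + br y (br b w)" by (rule deriv)
        moreover have "br (br b y) w \<in> U" using y(3)[OF b] \<open>w \<in> W0\<close> unfolding W0_def by blast
        moreover have "br y (br b w) \<in> U" using p(10) y(1) b \<open>w \<in> W0\<close> unfolding W0_def by blast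
        ultimately show ?thesis using p(5) subspace_add by metis
      qed
      ultimately show ?thesis unfolding W0_def by blast
    qed
    have w1W0: "w1 \<in> W0" unfolding W0_def using w1 by blast
    have itW0: "(br y ^^ i) w1 \<in> W0" for i by (rule iter_in[OF W0y w1W0])
    obtain n where "(br y ^^ n) w1 \<in> K" using nil y(1) p(3) w1(1) p(8) by blast
    then have "(br y ^^ n) w1 \<in> U" using p(6) by blast
    then obtain k where k: "(br y ^^ k) w1 \<notin> U" "(br y ^^ Suc k) w1 \<in> U"
      using nat_step_lemma[of "\<lambda>i. (br y ^^ i) w1 \<in> U" n] w1(2) by auto
    define w where "w = (br y ^^ k) w1"
    have wW0: "w \<in> W0" unfolding w_def by (rule itW0)
    have yw: "br y w \<in> U" using k(2) unfolding w_def by simp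
    have "\<forall>a\<in>A. br a w \<in> U"
    proof
      fix a assume "a \<in> A"
      then obtain b c where a: "a = b + scale c y" "b \<in> B" using TeqA unfolding T_def by blast
      have "br a w = br b w + scale c (br y w)" using a by (simp add: addl scl)
      moreover have "br b w \<in> U" using wW0 a(2) unfolding W0_def by blast
      ultimately show "br a w \<in> U" using yw p(5) subspace_add subspace_scale by metis
    qed
    moreover have "w \<in> W" "w \<notin> U" using wW0 k(1) unfolding W0_def w_def by auto
    ultimately show ?thesis by blast
  qed
qed


lemma ext_max:
  assumes "subalg S" "S \<noteq> UNIV"
  obtains M where "maximal_subalgebra scale br M" "S \<subseteq> M"
proof -
  let ?Q = "\<lambda>T. subalg T \<and> S \<subseteq> T \<and> T \<noteq> UNIV"
  have "?Q S" using assms by blast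
  then obtain M where M: "?Q M" and Mm: "\<And>T. ?Q T \<Longrightarrow> dim T \<le> dim M"
    by (rule choose_max[of ?Q S]) blast+
  have "maximal_subalgebra scale br M"
    unfolding maximal_subalgebra_def
  proof (intro conjI allI impI)
    show "subalg M" "M \<noteq> UNIV" using M by auto
    fix T assume T: "subalg T \<and> M \<subseteq> T"
    show "T = M \<or> T = UNIV"
    proof (cases "T = UNIV")
      case False
      then have "dim T \<le> dim M" using T M by (intro Mm) blast
      then have "M = T" using subspace_dim_equal[of M T] T M subalg_sub by blast
      then show ?thesis by blast
    qed simp
  qed
  then show ?thesis using M that by blast
qed

lemma pow_add: "(br x ^^ n) (u + v) = (br x ^^ n) u + (br x ^^ n) v"
  by (induction n) (simp_all add: addr)
lemma pow_zero: "(br x ^^ n) 0 = 0" by (induction n) simp_all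
lemma pow_scale: "(br x ^^ n) (scale c v) = scale c ((br x ^^ n) v)"
  by (induction n) (simp_all add: scr)
lemma pow_diff: "(br x ^^ n) (u - v) = (br x ^^ n) u - (br x ^^ n) v"
  by (induction n) (simp_all add: diffr)

lemma pow_br: "(br x ^^ i) a = 0 \<Longrightarrow> (br x ^^ j) b = 0 \<Longrightarrow> (br x ^^ (i+j)) (br a b) = 0"
proof (induction "i+j" arbitrary: i j a b rule: less_induct)
  case less
  show ?case
  proof (cases "i = 0 \<or> j = 0")
    case True
    then show ?thesis using less.prems by (auto simp: pow_zero)
  next
    case False
    then obtain i' j' where ij: "i = Suc i'" "j = Suc j'" by (meson not0_implies_Suc)
    have e: "i' + j = i + j'" using ij by simp
    have "(br x ^^ (i+j)) (br a b) = (br x ^^ (i' + j)) (br x (br a b))"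
      using ij by (simp add: funpow_Suc_right del: funpow.simps)
    also have "\<dots> = (br x ^^ (i'+j)) (br (br x a) b) + (br x ^^ (i + j')) (br a (br x b))"
      using deriv[of x a b] e by (simp add: pow_add)
    also have "\<dots> = 0"
    proof -
      have a': "(br x ^^ i') (br x a) = 0" using less.prems(1) ij by (simp add: funpow_Suc_right del: funpow.simps)
      have b': "(br x ^^ j') (br x b) = 0" using less.prems(2) ij by (simp add: funpow_Suc_right del: funpow.simps)
      have "(br x ^^ (i'+j)) (br (br x a) b) = 0" using less.hyps[of i' j] a' less.prems(2) ij by simp
      moreover have "(br x ^^ (i+j')) (br a (br x b)) = 0" using less.hyps[of i j'] b' less.prems(1) ij by simp
      ultimately show ?thesis by simp
    qed
    finally show ?thesis .
  qed
qed

lemma pow_more: "(br x ^^ n) v = 0 \<Longrightarrow> (br x ^^ (m + n)) v = 0"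
  by (simp add: funpow_add pow_zero)

lemma fitting:
  fixes x :: 'b
  obtains N where "N \<ge> 1" "\<And>v. \<exists>v0 u. v = v0 + (br x ^^ N) u \<and> (br x ^^ N) v0 = 0"
proof -
  let ?f = "br x"
  define X where "X n = range (?f ^^ n)" for n
  have Xs: "subspace (X n)" for n
    unfolding subspace_def X_def
  proof (intro conjI ballI allI)
    have "(?f ^^ n) 0 = 0" by (rule pow_zero)
    then show "0 \<in> range (?f ^^ n)" by (metis rangeI)
    fix u v assume "u \<in> range (?f ^^ n)" "v \<in> range (?f ^^ n)"
    then obtain a b where "u = (?f ^^ n) a" "v = (?f ^^ n) b" by blast
    then have "u + v = (?f ^^ n) (a + b)" by (simp add: pow_add)
    then show "u + v \<in> range (?f ^^ n)" by blast
  next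
    fix c u assume "u \<in> range (?f ^^ n)"
    then obtain a where "u = (?f ^^ n) a" by blast
    then have "scale c u = (?f ^^ n) (scale c a)" by (simp add: pow_scale)
    then show "scale c u \<in> range (?f ^^ n)" by blast
  qed
  have Xd: "X (Suc n) \<subseteq> X n" for n
  proof
    fix v assume "v \<in> X (Suc n)"
    then obtain a where "v = (?f ^^ Suc n) a" unfolding X_def by blast
    then have "v = (?f ^^ n) (?f a)" by (simp add: funpow_Suc_right del: funpow.simps)
    then show "v \<in> X n" unfolding X_def by blast
  qed
  have XS: "X (Suc n) = ?f ` X n" for n unfolding X_def by (simp add: image_comp)
  obtain k where k: "X (Suc k) = X k" using stab[of X, OF Xs Xd] by blast
  have Xk: "X (k + j) = X k" for j
  proof (induction j)
    case (Suc j)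
    have "X (k + Suc j) = ?f ` X (k + j)" using XS[of "k+j"] by simp
    also have "\<dots> = ?f ` X k" using Suc by simp
    also have "\<dots> = X k" using XS[of k] k by simp
    finally show ?case .
  qed simp
  define N where "N = Suc k"
  have XN: "X N = X (N + N)" using Xk[of 1] Xk[of "Suc (Suc k)"] unfolding N_def by simp
  have "\<exists>v0 u. v = v0 + (?f ^^ N) u \<and> (?f ^^ N) v0 = 0" for v
  proof -
    have "(?f ^^ N) v \<in> X (N + N)" using XN unfolding X_def by blast
    then obtain u where u: "(?f ^^ N) v = (?f ^^ (N + N)) u" unfolding X_def by blast
    have "(?f ^^ N) v = (?f ^^ N) ((?f ^^ N) u)" using u by (simp add: funpow_add)
    then have "(?f ^^ N) (v - (?f ^^ N) u) = 0" by (simp add: pow_diff)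
    moreover have "v = (v - (?f ^^ N) u) + (?f ^^ N) u" by simp
    ultimately show ?thesis by blast
  qed
  then show ?thesis using that[of N] unfolding N_def by simp
qed

lemma sep:
  assumes K: "ideal K" and J: "ideal J" and xJ: "x \<in> J" and y: "\<And>n. (br x ^^ n) y \<notin> K"
  obtains M where "maximal_subalgebra scale br M" "K \<subseteq> M" "\<not> J \<subseteq> M"
proof -
  let ?f = "br x"
  define L0 where "L0 = {v. \<exists>n. (?f ^^ n) v = 0}"
  define S where "S = {l + k | l k. l \<in> L0 \<and> k \<in> K}"
  have Ksub: "subspace K" using K ideal_sub by blast
  have L0_0: "0 \<in> L0" unfolding L0_def using pow_zero by blast
  have KS: "K \<subseteq> S" unfolding S_def using L0_0 by force
  have L0S: "L0 \<subseteq> S" unfolding S_def using subspace_0[OF Ksub] by force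
  have Ssa: "subalg S" unfolding lie_subalgebra_def subspace_def
  proof (intro conjI ballI allI)
    show "0 \<in> S" using KS subspace_0[OF Ksub] by blast
    fix u v assume "u \<in> S" "v \<in> S"
    then obtain l k l' k' where uv: "u = l + k" "v = l' + k'" "l \<in> L0" "k \<in> K" "l' \<in> L0" "k' \<in> K"
      unfolding S_def by blast
    obtain n n' where n: "(?f ^^ n) l = 0" "(?f ^^ n') l' = 0" using uv unfolding L0_def by blast
    have "(?f ^^ (n + n')) (l + l') = 0"
      using pow_more[OF n(1), of n'] pow_more[OF n(2), of n] by (simp add: pow_add add.commute)
    then have "l + l' \<in> L0" unfolding L0_def by blast
    moreover have "k + k' \<in> K" using uv Ksub subspace_add by blast
    moreover have "u + v = (l + l') + (k + k')" using uv by (simp add: algebra_simps)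
    ultimately show "u + v \<in> S" unfolding S_def by blast
    have "(?f ^^ (n + n')) (br l l') = 0" using pow_br[OF n] .
    then have "br l l' \<in> L0" unfolding L0_def by blast
    moreover have "br l k' + br k l' + br k k' \<in> K"
      using uv K ideal_l ideal_r Ksub subspace_add by metis
    moreover have "br u v = br l l' + (br l k' + br k l' + br k k')"
      using uv by (simp add: addl addr add.assoc)
    ultimately show "br u v \<in> S" unfolding S_def by blast
  next
    fix c u assume "u \<in> S"
    then obtain l k where uv: "u = l + k" "l \<in> L0" "k \<in> K" unfolding S_def by blast
    obtain n where "(?f ^^ n) l = 0" using uv unfolding L0_def by blast
    then have "(?f ^^ n) (scale c l) = 0" by (simp add: pow_scale)
    then have "scale c l \<in> L0" unfolding L0_def by blast
    moreover have "scale c k \<in> K" using uv Ksub subspace_scale by blast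
    moreover have "scale c u = scale c l + scale c k" using uv by (simp add: algebra_simps)
    ultimately show "scale c u \<in> S" unfolding S_def by blast
  qed
  have "y \<notin> S"
  proof
    assume "y \<in> S"
    then obtain l k where uv: "y = l + k" "l \<in> L0" "k \<in> K" unfolding S_def by blast
    obtain n where n: "(?f ^^ n) l = 0" using uv unfolding L0_def by blast
    have "(?f ^^ n) k \<in> K" by (rule iter_in[OF _ uv(3)]) (use K ideal_l in blast)
    then have "(?f ^^ n) y \<in> K" using uv n by (simp add: pow_add)
    then show False using y by blast
  qed
  then have "S \<noteq> UNIV" by blast
  then obtain M where M: "maximal_subalgebra scale br M" "S \<subseteq> M" using ext_max Ssa by blast
  have "\<not> J \<subseteq> M"
  proof
    assume JM: "J \<subseteq> M"
    obtain N where N: "N \<ge> 1" "\<And>v. \<exists>v0 u. v = v0 + (?f ^^ N) u \<and> (?f ^^ N) v0 = 0"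
      using fitting[of x] by blast
    have Msub: "subspace M" using M(1) max_subalg subalg_sub by blast
    have "v \<in> M" for v
    proof -
      obtain v0 u where vu: "v = v0 + (?f ^^ N) u" "(?f ^^ N) v0 = 0" using N(2) by blast
      have "v0 \<in> M" using vu(2) L0S M(2) unfolding L0_def by blast
      moreover have "(?f ^^ N) u \<in> J"
      proof -
        obtain N' where "N = Suc N'" using N(1) by (cases N) auto
        then have "(?f ^^ N) u = br x ((?f ^^ N') u)" by simp
        then show ?thesis using J xJ ideal_r by metis
      qed
      ultimately show ?thesis using vu(1) JM Msub subspace_add by blast
    qed
    then show False using M(1) unfolding maximal_subalgebra_def by blast
  qed
  then show ?thesis using that M KS by blast
qed


lemma sum_sub:
  assumes "subspace A" "subspace B" shows "subspace {a + b | a b. a \<in> A \<and> b \<in> B}"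
  unfolding subspace_def
proof (intro conjI ballI allI)
  show "0 \<in> {a + b | a b. a \<in> A \<and> b \<in> B}" using assms subspace_0 by force
  fix u v assume "u \<in> {a + b | a b. a \<in> A \<and> b \<in> B}" "v \<in> {a + b | a b. a \<in> A \<and> b \<in> B}"
  then obtain a b a' b' where uv: "u = a + b" "v = a' + b'" "a \<in> A" "b \<in> B" "a' \<in> A" "b' \<in> B" by blast
  have "u + v = (a + a') + (b + b')" using uv by (simp add: algebra_simps)
  then show "u + v \<in> {a + b | a b. a \<in> A \<and> b \<in> B}" using uv assms subspace_add by blast
next
  fix c u assume "u \<in> {a + b | a b. a \<in> A \<and> b \<in> B}"
  then obtain a b where uv: "u = a + b" "a \<in> A" "b \<in> B" by blast
  have "scale c u = scale c a + scale c b" using uv by (simp add: algebra_simps)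
  then show "scale c u \<in> {a + b | a b. a \<in> A \<and> b \<in> B}" using uv assms subspace_scale by blast
qed

lemma sum_ideal:
  assumes "ideal A" "ideal B" shows "ideal {a + b | a b. a \<in> A \<and> b \<in> B}"
  unfolding lie_ideal_def
proof (intro conjI allI ballI)
  show "subspace {a + b | a b. a \<in> A \<and> b \<in> B}" using sum_sub assms ideal_sub by blast
  fix z u assume "u \<in> {a + b | a b. a \<in> A \<and> b \<in> B}"
  then obtain a b where uv: "u = a + b" "a \<in> A" "b \<in> B" by blast
  have "br z u = br z a + br z b" using uv by (simp add: addr)
  then show "br z u \<in> {a + b | a b. a \<in> A \<and> b \<in> B}" using uv assms ideal_l by blast
qed

lemma sum_subalg:
  assumes "subalg A" "ideal B" shows "subalg {a + b | a b. a \<in> A \<and> b \<in> B}"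
  unfolding lie_subalgebra_def
proof (intro conjI allI ballI)
  show "subspace {a + b | a b. a \<in> A \<and> b \<in> B}" using sum_sub assms ideal_sub subalg_sub by blast
  fix u v assume "u \<in> {a + b | a b. a \<in> A \<and> b \<in> B}" "v \<in> {a + b | a b. a \<in> A \<and> b \<in> B}"
  then obtain a b a' b' where uv: "u = a + b" "v = a' + b'" "a \<in> A" "b \<in> B" "a' \<in> A" "b' \<in> B" by blast
  have "br u v = br a a' + (br a b' + br b a' + br b b')" using uv by (simp add: addl addr add.assoc)
  moreover have "br a a' \<in> A" using uv assms subalg_br by blast
  moreover have "br a b' + br b a' + br b b' \<in> B"
    using uv assms ideal_l ideal_r ideal_sub subspace_add by metis
  ultimately show "br u v \<in> {a + b | a b. a \<in> A \<and> b \<in> B}" by blast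
qed

lemma inter_ideal: "ideal A \<Longrightarrow> ideal B \<Longrightarrow> ideal (A \<inter> B)"
  unfolding lie_ideal_def using subspace_inter by blast

lemma no_aic:
  assumes M: "maximal_subalgebra scale br M" and K: "ideal K" and J: "ideal J" and KJ: "K \<subseteq> J"
    and Kmax: "\<And>Z. ideal Z \<Longrightarrow> K \<subseteq> Z \<Longrightarrow> Z \<subseteq> J \<Longrightarrow> Z = K \<or> Z = J"
    and perf: "J \<subseteq> lie_bracket_set scale br J J"
    and KM: "K \<subseteq> M" and JM: "\<not> J \<subseteq> M"
  shows "\<not> (\<exists>C. abelian_ideal_completion scale br M C)"
proof
  assume "\<exists>C. abelian_ideal_completion scale br M C"
  then obtain C where compl: "completion scale br M C" and Ci: "ideal C"
    and ab: "\<And>x y. x \<in> C \<Longrightarrow> y \<in> C \<Longrightarrow> br x y \<in> strict_core scale br C"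
    unfolding abelian_ideal_completion_def ideal_completion_def by blast
  have Msa: "subalg M" using M max_subalg by blast
  have Msub: "subspace M" using Msa subalg_sub by blast
  have sc: "strict_core scale br C \<subseteq> M" using strict_core_sub compl Msub by blast
  have CM: "\<not> C \<subseteq> M" using compl unfolding completion_def by blast
  have subM: "\<And>I. ideal I \<Longrightarrow> I \<subset> C \<Longrightarrow> I \<subseteq> M"
    using compl ideal_subalg unfolding completion_def by blast
  have Csub: "subspace C" using Ci ideal_sub by blast
  have Ksub: "subspace K" using K ideal_sub by blast
  have key: "br j1 j2 \<in> M" if j: "j1 \<in> J" "j2 \<in> J" for j1 j2
  proof (cases "C \<subseteq> J")
    case True
    let ?Z = "{a + b | a b. a \<in> C \<and> b \<in> K}"
    have Zi: "ideal ?Z" using sum_ideal Ci K by blast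
    have KZ: "K \<subseteq> ?Z" using subspace_0[OF Csub] by force
    have CZ: "C \<subseteq> ?Z" using subspace_0[OF Ksub] by force
    have ZJ: "?Z \<subseteq> J"
    proof
      fix z assume "z \<in> ?Z"
      then obtain a b where ab: "z = a + b" "a \<in> C" "b \<in> K" by blast
      have "a \<in> J" using ab(2) \<open>C \<subseteq> J\<close> by blast
      moreover have "b \<in> J" using ab(3) KJ by blast
      ultimately show "z \<in> J" unfolding ab(1) by (rule subspace_add[OF ideal_sub[OF J]])
    qed
    have CnK: "\<not> C \<subseteq> K" using CM KM by blast
    have "?Z \<noteq> K"
    proof
      assume "?Z = K"
      then have "C \<subseteq> K" using CZ by simp
      then show False using CnK by simp
    qed
    then have ZeJ: "?Z = J" using Kmax[OF Zi KZ ZJ] by (simp only: simp_thms)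
    have "C \<inter> K \<subset> C" using CnK by blast
    then have CK: "C \<inter> K \<subseteq> M" by (rule subM[OF inter_ideal[OF Ci K]])
    have "j1 \<in> ?Z" "j2 \<in> ?Z" using j ZeJ by simp_all
    then obtain c1 k1 c2 k2 where 1: "j1 = c1 + k1" "c1 \<in> C" "k1 \<in> K"
      and 2: "j2 = c2 + k2" "c2 \<in> C" "k2 \<in> K" by blast
    have e: "br j1 j2 = br c1 c2 + br c1 k2 + br k1 c2 + br k1 k2"
      using 1 2 by (simp add: addl addr add.assoc)
    have "br c1 c2 \<in> M" using ab 1 2 sc by blast
    moreover have "br c1 k2 \<in> M" using CK ideal_r[OF Ci 1(2)] ideal_l[OF K 2(3)] by blast
    moreover have "br k1 c2 \<in> M" using CK ideal_l[OF Ci 2(2)] ideal_r[OF K 1(3)] by blast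
    moreover have "br k1 k2 \<in> M" using KM ideal_l[OF K 2(3)] by blast
    ultimately show ?thesis unfolding e using Msub subspace_add by metis
  next
    case False
    have "J \<inter> C \<subset> C" using False by blast
    then have JC: "J \<inter> C \<subseteq> M" by (rule subM[OF inter_ideal[OF J Ci]])
    let ?MC = "{a + b | a b. a \<in> M \<and> b \<in> C}"
    have MCsa: "subalg ?MC" using sum_subalg Msa Ci by blast
    have "M \<subseteq> ?MC" using subspace_0[OF Csub] by force
    moreover have CMC: "C \<subseteq> ?MC" using subspace_0[OF Msub] by force
    ultimately have "?MC = M \<or> ?MC = UNIV" using M MCsa unfolding maximal_subalgebra_def by blast
    moreover have "?MC \<noteq> M" using CMC CM by blast
    ultimately have "?MC = UNIV" by blast
    then have "j1 \<in> ?MC" "j2 \<in> ?MC" by simp_all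
    then obtain m1 c1 m2 c2 where 1: "j1 = m1 + c1" "m1 \<in> M" "c1 \<in> C"
      and 2: "j2 = m2 + c2" "m2 \<in> M" "c2 \<in> C" by blast
    have e: "br j1 j2 = br m1 m2 + (br c1 j2 - br c1 c2) + br j1 c2"
    proof -
      have "br j1 j2 = br j1 m2 + br j1 c2" using 2 by (simp add: addr)
      moreover have "br j1 m2 = br m1 m2 + br c1 m2" using 1 by (simp add: addl)
      moreover have "br c1 m2 = br c1 j2 - br c1 c2" using 2 by (simp add: addr)
      ultimately show ?thesis by simp
    qed
    have "br m1 m2 \<in> M" using 1 2 Msa subalg_br by blast
    moreover have "br c1 j2 \<in> M" using JC ideal_r[OF Ci 1(3)] ideal_l[OF J j(2)] by blast
    moreover have "br c1 c2 \<in> M" using ab 1 2 sc by blast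
    moreover have "br j1 c2 \<in> M" using JC ideal_l[OF Ci 2(3)] ideal_r[OF J j(1)] by blast
    ultimately show ?thesis unfolding e using Msub subspace_add subspace_diff by metis
  qed
  have "lie_bracket_set scale br J J \<subseteq> M"
    unfolding lie_bracket_set_def using key Msub by (intro span_minimal) blast+
  then show False using perf JM by blast
qed

lemma ideal_zero: "ideal {0}"
  unfolding lie_ideal_def subspace_def by simp

lemma part2:
  assumes I: "ideal I" "I \<subseteq> Fstar scale br" shows "lie_solvable scale br I"
proof (rule ccontr)
  assume ns: "\<not> lie_solvable scale br I"
  let ?D = "\<lambda>n. derived_series scale br n I"
  have "subspace (?D m)" for m using ds_ideal[OF I(1)] ideal_sub by blast
  moreover have "?D (Suc m) \<subseteq> ?D m" for m by (rule ds_dec[OF I(1)])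
  ultimately obtain n where n: "?D (Suc n) = ?D n"
    using stab[of ?D] by blast
  define J where "J = ?D n"
  have Jne: "J \<noteq> {0}" using ns unfolding lie_solvable_def J_def by blast
  have Ji: "ideal J" unfolding J_def using ds_ideal I(1) by blast
  have Jsub: "subspace J" using Ji ideal_sub by blast
  have perf: "J \<subseteq> lie_bracket_set scale br J J" using n unfolding J_def by simp
  have JF: "J \<subseteq> Fstar scale br" unfolding J_def using ds_le I by blast
  let ?Q = "\<lambda>K. ideal K \<and> K \<subseteq> J \<and> K \<noteq> J"
  have "{0} \<subseteq> J" using subspace_0[OF Jsub] by blast
  then have "?Q {0}" using ideal_zero Jne by (intro conjI) auto
  then obtain K where Kq: "?Q K" and Km: "\<And>K'. ?Q K' \<Longrightarrow> dim K' \<le> dim K"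
    by (rule choose_max[of ?Q "{0}"]) blast+
  have K: "ideal K" and KJ: "K \<subseteq> J" and KnJ: "K \<noteq> J" using Kq by auto
  have Ksub: "subspace K" using K ideal_sub by blast
  have Kmax: "Z = K \<or> Z = J" if Z: "ideal Z" "K \<subseteq> Z" "Z \<subseteq> J" for Z
  proof (cases "Z = J")
    case False
    then have "dim Z \<le> dim K" using Z by (intro Km) blast
    then have "K = Z" using subspace_dim_equal[of K Z] Z Ksub ideal_sub by blast
    then show ?thesis by blast
  qed simp
  have "\<not> (\<forall>x\<in>J. \<forall>y\<in>J. \<exists>n. (br x ^^ n) y \<in> K)"
  proof
    assume nil: "\<forall>x\<in>J. \<forall>y\<in>J. \<exists>n. (br x ^^ n) y \<in> K"
    have "\<exists>w\<in>J. w \<notin> K \<and> (\<forall>a\<in>J. br a w \<in> K)"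
    proof (rule engel[of K J J J K])
      show "ideal K" by fact
      show "\<And>x y. x \<in> J \<Longrightarrow> y \<in> J \<Longrightarrow> \<exists>n. (br x ^^ n) y \<in> K" using nil by blast
      show "subalg J" using Ji ideal_subalg by blast
      show "K \<subseteq> J" "J \<subseteq> J" "subspace J" "subspace K" "K \<subseteq> K" "K \<subset> J" "J \<subseteq> J"
        using KJ KnJ Jsub Ksub by auto
      show "br a w \<in> J" if "a \<in> J" "w \<in> J" for a w using that Ji ideal_l by blast
      show "br a u \<in> K" if "a \<in> J" "u \<in> K" for a u using that K ideal_l by blast
    qed
    then obtain w where w: "w \<in> J" "w \<notin> K" "\<forall>a\<in>J. br a w \<in> K" by blast
    define Z where "Z = {z \<in> J. \<forall>a\<in>J. br a z \<in> K}"
    have Zi: "ideal Z" unfolding lie_ideal_def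
    proof (intro conjI allI ballI)
      show "subspace Z" unfolding subspace_def Z_def
        using Jsub Ksub subspace_0 subspace_add subspace_scale by (auto simp: addr scr)
      fix l z assume z: "z \<in> Z"
      have "br l z \<in> J" using z Ji ideal_l unfolding Z_def by blast
      moreover have "br a (br l z) \<in> K" if a: "a \<in> J" for a
      proof -
        have "br a (br l z) = br (br a l) z + br l (br a z)" by (rule deriv)
        moreover have "br (br a l) z \<in> K" using z a Ji ideal_r unfolding Z_def by blast
        moreover have "br l (br a z) \<in> K" using z a K ideal_l unfolding Z_def by blast
        ultimately show ?thesis using Ksub subspace_add by metis
      qed
      ultimately show "br l z \<in> Z" unfolding Z_def by blast
    qed
    have KZ: "K \<subseteq> Z"
    proof
      fix k assume k: "k \<in> K"
      have "\<forall>a\<in>J. br a k \<in> K" using ideal_l[OF K k] by blast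
      moreover have "k \<in> J" using k KJ by blast
      ultimately show "k \<in> Z" unfolding Z_def by blast
    qed
    have wZ: "w \<in> Z" using w unfolding Z_def by blast
    have "Z \<noteq> K" using wZ w(2) by blast
    moreover have "Z \<subseteq> J" unfolding Z_def by blast
    ultimately have ZJ: "Z = J" using Kmax[OF Zi KZ] by (simp only: simp_thms)
    have "br a b \<in> K" if "a \<in> J" "b \<in> J" for a b
    proof -
      have "b \<in> Z" using that(2) ZJ by simp
      then show ?thesis using that(1) unfolding Z_def by blast
    qed
    then have "{br x y |x y. x \<in> J \<and> y \<in> J} \<subseteq> K" by blast
    then have "lie_bracket_set scale br J J \<subseteq> K"
      unfolding lie_bracket_set_def using Ksub by (rule span_minimal)
    then show False using perf KJ KnJ by blast
  qed
  then obtain x y where xy: "x \<in> J" "y \<in> J" "\<And>n. (br x ^^ n) y \<notin> K" by blast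
  obtain M where M: "maximal_subalgebra scale br M" "K \<subseteq> M" "\<not> J \<subseteq> M"
    using sep[OF K Ji xy(1) xy(3)] by blast
  have "\<not> (\<exists>C. abelian_ideal_completion scale br M C)"
    using no_aic[OF M(1) K Ji KJ Kmax perf M(2) M(3)] by blast
  then have "Fstar scale br \<subseteq> M" unfolding Fstar_def using M(1) by blast
  then show False using JF M(3) by blast
qed

lemma main: "phistar scale br = solv_radical scale br"
proof -
  have "(\<lambda>I. ideal I \<and> I \<subseteq> Fstar scale br) = (\<lambda>I. ideal I \<and> lie_solvable scale br I)"
  proof (rule ext)
    fix I show "(ideal I \<and> I \<subseteq> Fstar scale br) = (ideal I \<and> lie_solvable scale br I)"
      using part2[of I] solv_in_Fstar[of I] by blast
  qed
  then show ?thesis unfolding phistar_def solv_radical_def by simp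
qed

end

theorem theorem2p11:
  fixes scale :: "'a::field \<Rightarrow> 'b::ab_group_add \<Rightarrow> 'b"
    and br :: "'b \<Rightarrow> 'b \<Rightarrow> 'b"
  assumes "lie_algebra scale br"
    and "fin_dim scale"
  shows "phistar scale br = solv_radical scale br"
proof -
  interpret vector_space scale using assms(1) unfolding lie_algebra_def by blast
  obtain B0 where B0: "finite B0" "span B0 = UNIV" using assms(2) unfolding fin_dim_def by blast
  obtain B where B: "B \<subseteq> B0" "independent B" "B0 \<subseteq> span B" using maximal_independent_subset[of B0] by blast
  have "span B = UNIV" using B(3) B0(2) span_mono[OF B(3)] span_span by (metis top.extremum_uniqueI)
  moreover have "finite B" using B(1) B0(1) finite_subset by blast
  ultimately interpret fdl scale B br
    using B(2) assms(1) by unfold_locales auto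
  show ?thesis by (rule main)
qed

end
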